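(* For every real number $\alpha$, the space $Z_\alpha$ is Cartesian, i.e. $Z_\alpha$ is isomorphic (via a bijective bounded linear map with bounded inverse) to its Cartesian square $Z_\alpha \oplus Z_\alpha$.
   Context: Fix $\alpha\in\mathbb{R}$ and let $f_\alpha(t):=t^{1+i\alpha}$ for $0\le t<\infty$. For a sequence $x=(\xi_k)\in \ell_2$ (complex-valued) define the sequence $\Omega_\alpha(x)$ by $(\Omega_\alpha(x))_k:=\xi_k f_\alpha\left(\log \frac{\|x\|_2}{|\xi_k|}\right)$ if $\xi_k\neq 0$ and $(\Omega_\alpha(x))_k:=0$ otherwise. Let $Z_\alpha$ be the space of all pairs $(x,y)$ of complex-valued sequences with $x\in\ell_2$ such that $\|(x,y)\|_\alpha:=\|x\|_2+\|y-\Omega_\alpha(x)\|_2<\infty$. (It is known, by Kalton, that $\|\cdot\|_\alpha$ is a quasi-norm on $Z_\alpha$ equivalent to a norm under which $Z_\alpha$ is a complex Banach space.) A Banach space $X$ is called Cartesian if it is isomorphic to $X\oplus X$. *)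

theory Defs
  imports "HOL-Analysis.Analysis"
begin

type_synonym cseq = "nat \<Rightarrow> complex"

definition in_l2 :: "cseq \<Rightarrow> bool" where
  "in_l2 x \<longleftrightarrow> summable (\<lambda>k. (cmod (x k))^2)"

definition l2norm :: "cseq \<Rightarrow> real" where
  "l2norm x = sqrt (\<Sum>k. (cmod (x k))^2)"

text \<open>f_alpha(t) = t^(1 + i alpha) for t >= 0 (complex power, with 0 powr w = 0).\<close>
definition f_alpha :: "real \<Rightarrow> real \<Rightarrow> complex" where
  "f_alpha \<alpha> t = (complex_of_real t) powr (1 + \<i> * complex_of_real \<alpha>)"

definition Omega :: "real \<Rightarrow> cseq \<Rightarrow> cseq" where
  "Omega \<alpha> x = (\<lambda>k. if x k = 0 then 0
       else x k * f_alpha \<alpha> (ln (l2norm x / cmod (x k))))"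

definition Zspace :: "real \<Rightarrow> (cseq \<times> cseq) set" where
  "Zspace \<alpha> = {(x, y). in_l2 x \<and> in_l2 (\<lambda>k. y k - Omega \<alpha> x k)}"

definition Znorm :: "real \<Rightarrow> cseq \<times> cseq \<Rightarrow> real" where
  "Znorm \<alpha> z = l2norm (fst z) + l2norm (\<lambda>k. snd z k - Omega \<alpha> (fst z) k)"

definition zadd :: "cseq \<times> cseq \<Rightarrow> cseq \<times> cseq \<Rightarrow> cseq \<times> cseq" where
  "zadd z w = ((\<lambda>k. fst z k + fst w k), (\<lambda>k. snd z k + snd w k))"

definition zscale :: "complex \<Rightarrow> cseq \<times> cseq \<Rightarrow> cseq \<times> cseq" where
  "zscale c z = ((\<lambda>k. c * fst z k), (\<lambda>k. c * snd z k))"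

text \<open>Boundedness w.r.t. the quasi-norms is
  the same as boundedness w.r.t. the equivalent norms.\<close>
definition Z_cartesian :: "real \<Rightarrow> bool" where
  "Z_cartesian \<alpha> \<longleftrightarrow>
    (\<exists>T S. (\<forall>z\<in>Zspace \<alpha>. T z \<in> Zspace \<alpha> \<times> Zspace \<alpha>)
      \<and> (\<forall>p\<in>Zspace \<alpha> \<times> Zspace \<alpha>. S p \<in> Zspace \<alpha>)
      \<and> (\<forall>z\<in>Zspace \<alpha>. S (T z) = z)
      \<and> (\<forall>p\<in>Zspace \<alpha> \<times> Zspace \<alpha>. T (S p) = p)
      \<and> (\<forall>z\<in>Zspace \<alpha>. \<forall>w\<in>Zspace \<alpha>. \<forall>a b.
            T (zadd (zscale a z) (zscale b w)) =
              (zadd (zscale a (fst (T z))) (zscale b (fst (T w))),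
               zadd (zscale a (snd (T z))) (zscale b (snd (T w)))))
      \<and> (\<exists>C. \<forall>z\<in>Zspace \<alpha>.
            Znorm \<alpha> (fst (T z)) + Znorm \<alpha> (snd (T z)) \<le> C * Znorm \<alpha> z)
      \<and> (\<exists>C. \<forall>p\<in>Zspace \<alpha> \<times> Zspace \<alpha>.
            Znorm \<alpha> (S p) \<le> C * (Znorm \<alpha> (fst p) + Znorm \<alpha> (snd p))))"

end

theory Submission
  imports Defs
begin


lemma f_alpha_lip_pos:
  assumes s: "s > 0" and t: "t > 0"
  shows "cmod (f_alpha a s - f_alpha a t) \<le> cmod (1 + \<i> * complex_of_real a) * \<bar>s - t\<bar>"
proof -
  define w where "w = 1 + \<i> * complex_of_real a"
  define S where "S = closed_segment (complex_of_real s) (complex_of_real t)"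
  have Sr: "\<And>z. z \<in> S \<Longrightarrow> \<exists>r. r > 0 \<and> z = complex_of_real r"
  proof -
    fix z assume "z \<in> S"
    then obtain r where r: "r \<in> closed_segment s t" "z = complex_of_real r"
      unfolding S_def closed_segment_of_real by auto
    have "r > 0" using r(1) s t by (auto simp: closed_segment_eq_real_ivl split: if_splits)
    then show "\<exists>r. r > 0 \<and> z = complex_of_real r" using r by blast
  qed
  have "cmod ((\<lambda>z. z powr w) (complex_of_real s) - (\<lambda>z. z powr w) (complex_of_real t))
        \<le> cmod w * cmod (complex_of_real s - complex_of_real t)"
  proof (rule field_differentiable_bound[where f' = "\<lambda>z. w * z powr (w - 1)"])
    show "convex S" unfolding S_def by simp
    show "complex_of_real s \<in> S" "complex_of_real t \<in> S" unfolding S_def by auto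
    fix z assume "z \<in> S"
    then obtain r where r: "r > 0" "z = complex_of_real r" using Sr by blast
    have "z \<notin> \<real>\<^sub>\<le>\<^sub>0" using r by (auto simp: nonpos_Reals_def)
    then show "((\<lambda>z. z powr w) has_field_derivative w * z powr (w - 1)) (at z within S)"
      by (rule has_field_derivative_at_within[OF has_field_derivative_powr])
    have "cmod (z powr (w - 1)) = 1" using norm_powr_real_powr[of z "w-1"] r by (simp add: w_def)
    then show "cmod (w * z powr (w - 1)) \<le> cmod w" by (simp add: norm_mult)
  qed
  moreover have "cmod (complex_of_real s - complex_of_real t) = \<bar>s - t\<bar>"
    by (metis norm_of_real of_real_diff)
  ultimately show ?thesis
    unfolding f_alpha_def w_def by simp
qed

lemma f_alpha_norm: "t \<ge> 0 \<Longrightarrow> cmod (f_alpha a t) = t"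
  proof -
  assume "t \<ge> 0"
  then show ?thesis unfolding f_alpha_def using norm_powr_real_powr[of "complex_of_real t" "1 + \<i> * complex_of_real a"] by simp
qed

lemma K_ge1: "cmod (1 + \<i> * complex_of_real a) \<ge> 1"
  using abs_Re_le_cmod[of "1 + \<i> * complex_of_real a"] by simp

lemma f_alpha_lip:
  assumes s: "s \<ge> 0" and t: "t \<ge> 0"
  shows "cmod (f_alpha a s - f_alpha a t) \<le> cmod (1 + \<i> * complex_of_real a) * \<bar>s - t\<bar>"
proof (cases "s = 0 \<or> t = 0")
  case True
  have z: "f_alpha a 0 = 0" by (simp add: f_alpha_def)
  have "cmod (f_alpha a s - f_alpha a t) \<le> \<bar>s - t\<bar>"
    using True
  proof (elim disjE)
    assume "s = 0" then show ?thesis using z f_alpha_norm[of t a] t by simp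
  next
    assume "t = 0" then show ?thesis using z f_alpha_norm[of s a] s by simp
  qed
  also have "\<dots> \<le> cmod (1 + \<i> * complex_of_real a) * \<bar>s - t\<bar>"
    using K_ge1[of a] by (simp add: mult_le_cancel_right1)
  finally show ?thesis .
next
  case False then show ?thesis using f_alpha_lip_pos s t by auto
qed


lemma l2_sq: "in_l2 x \<Longrightarrow> (l2norm x)^2 = (\<Sum>k. (cmod (x k))^2)"
  unfolding l2norm_def in_l2_def by (simp add: suminf_nonneg)

lemma l2_nonneg: "in_l2 x \<Longrightarrow> l2norm x \<ge> 0"
  unfolding l2norm_def in_l2_def by (simp add: suminf_nonneg)

lemma l2_finite_le: "in_l2 x \<Longrightarrow> finite F \<Longrightarrow> (\<Sum>i\<in>F. (cmod (x i))^2) \<le> (l2norm x)^2"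
  using sum_le_suminf[of "\<lambda>k. (cmod (x k))^2" F] by (simp add: l2_sq in_l2_def)

lemma l2_point_le: "in_l2 x \<Longrightarrow> cmod (x k) \<le> l2norm x"
proof -
  assume h: "in_l2 x"
  have "(cmod (x k))^2 \<le> (l2norm x)^2" using l2_finite_le[OF h, of "{k}"] by simp
  then show ?thesis using l2_nonneg[OF h] by (rule power2_le_imp_le)
qed

lemma l2_from_bound:
  assumes b: "\<And>n. (\<Sum>k<n. (cmod (x k))^2) \<le> B^2" and B: "0 \<le> B"
  shows "in_l2 x \<and> l2norm x \<le> B"
proof -
  have s: "summable (\<lambda>k. (cmod (x k))^2)"
    by (rule summableI_nonneg_bounded[OF _ b]) simp
  have "(\<Sum>k. (cmod (x k))^2) \<le> B^2" by (rule suminf_le_const[OF s b])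
  then have "l2norm x \<le> sqrt (B^2)" unfolding l2norm_def by (simp only: real_sqrt_le_iff)
  then show ?thesis using s B by (simp add: in_l2_def)
qed

lemma l2_L2set_le: "in_l2 x \<Longrightarrow> L2_set (\<lambda>k. cmod (x k)) {..<n} \<le> l2norm x"
proof -
  assume h: "in_l2 x"
  have "L2_set (\<lambda>k. cmod (x k)) {..<n} \<le> sqrt ((l2norm x)^2)"
    unfolding L2_set_def using l2_finite_le[OF h, of "{..<n}"] by (simp only: real_sqrt_le_iff finite_lessThan)
  then show ?thesis using l2_nonneg[OF h] by simp
qed

lemma l2_triangle:
  assumes p: "in_l2 p" and q: "in_l2 q" and r: "\<And>k. cmod (r k) \<le> cmod (p k) + cmod (q k)"
  shows "in_l2 r \<and> l2norm r \<le> l2norm p + l2norm q"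
proof (rule l2_from_bound)
  show "0 \<le> l2norm p + l2norm q" using l2_nonneg[OF p] l2_nonneg[OF q] by simp
  fix n
  have "L2_set (\<lambda>k. cmod (r k)) {..<n} \<le> L2_set (\<lambda>k. cmod (p k) + cmod (q k)) {..<n}"
    by (rule L2_set_mono) (auto simp: r)
  also have "\<dots> \<le> L2_set (\<lambda>k. cmod (p k)) {..<n} + L2_set (\<lambda>k. cmod (q k)) {..<n}"
    by (rule L2_set_triangle_ineq)
  also have "\<dots> \<le> l2norm p + l2norm q" using l2_L2set_le[OF p, of n] l2_L2set_le[OF q, of n] by (rule add_mono)
  finally have le: "L2_set (\<lambda>k. cmod (r k)) {..<n} \<le> l2norm p + l2norm q" .
  have "(\<Sum>k<n. (cmod (r k))^2) = (L2_set (\<lambda>k. cmod (r k)) {..<n})^2"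
    unfolding L2_set_def by (simp add: sum_nonneg)
  also have "\<dots> \<le> (l2norm p + l2norm q)^2" by (rule power_mono[OF le]) simp
  finally show "(\<Sum>k<n. (cmod (r k))^2) \<le> (l2norm p + l2norm q)^2" .
qed

lemma l2_restrict:
  assumes x: "in_l2 x" and g: "inj g"
  shows "in_l2 (\<lambda>k. x (g k)) \<and> l2norm (\<lambda>k. x (g k)) \<le> l2norm x"
proof (rule l2_from_bound[OF _ l2_nonneg[OF x]])
  fix n
  have "(\<Sum>k<n. (cmod (x (g k)))^2) = (\<Sum>i\<in>g ` {..<n}. (cmod (x i))^2)"
    using g by (simp add: sum.reindex inj_on_def)
  also have "\<dots> \<le> (l2norm x)^2" by (rule l2_finite_le[OF x]) simp
  finally show "(\<Sum>k<n. (cmod (x (g k)))^2) \<le> (l2norm x)^2" .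
qed

definition zmerge :: "cseq \<Rightarrow> cseq \<Rightarrow> cseq" where
  "zmerge a c = (\<lambda>k. if even k then a (k div 2) else c (k div 2))"

lemma zmerge_sum: "(\<Sum>k<2*m. (cmod (zmerge a c k))^2) = (\<Sum>j<m. (cmod (a j))^2) + (\<Sum>j<m. (cmod (c j))^2)"
proof (induction m)
  case 0 then show ?case by simp
next
  case (Suc m)
  have e: "2 * Suc m = Suc (Suc (2*m))" by simp
  show ?case unfolding e using Suc by (simp add: zmerge_def)
qed

lemma l2_zmerge:
  assumes a: "in_l2 a" and c: "in_l2 c"
  shows "in_l2 (zmerge a c) \<and> l2norm (zmerge a c) \<le> l2norm a + l2norm c"
proof (rule l2_from_bound)
  show "0 \<le> l2norm a + l2norm c" using l2_nonneg[OF a] l2_nonneg[OF c] by simp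
  fix n
  have "(\<Sum>k<n. (cmod (zmerge a c k))^2) \<le> (\<Sum>k<2*n. (cmod (zmerge a c k))^2)"
    by (rule sum_mono2) auto
  also have "\<dots> = (\<Sum>j<n. (cmod (a j))^2) + (\<Sum>j<n. (cmod (c j))^2)" by (rule zmerge_sum)
  also have "\<dots> \<le> (l2norm a)^2 + (l2norm c)^2"
    using l2_finite_le[OF a, of "{..<n}"] l2_finite_le[OF c, of "{..<n}"] by simp
  also have "\<dots> \<le> (l2norm a + l2norm c)^2"
    using l2_nonneg[OF a] l2_nonneg[OF c] by (simp add: power2_sum)
  finally show "(\<Sum>k<n. (cmod (zmerge a c k))^2) \<le> (l2norm a + l2norm c)^2" .
qed

lemma omega_shift:
  assumes u: "in_l2 u" and N: "l2norm u \<le> N"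
  shows "in_l2 (\<lambda>k. (if u k = 0 then 0 else u k * f_alpha a (ln (N / cmod (u k)))) - Omega a u k)
     \<and> l2norm (\<lambda>k. (if u k = 0 then 0 else u k * f_alpha a (ln (N / cmod (u k)))) - Omega a u k)
        \<le> cmod (1 + \<i> * complex_of_real a) * N"
proof -
  define E where "E = (\<lambda>k. (if u k = 0 then 0 else u k * f_alpha a (ln (N / cmod (u k)))) - Omega a u k)"
  define K where "K = cmod (1 + \<i> * complex_of_real a)"
  define N1 where "N1 = l2norm u"
  have N1: "0 \<le> N1" "N1 \<le> N" using l2_nonneg[OF u] N by (auto simp: N1_def)
  have K0: "K \<ge> 0" by (simp add: K_def)
  have KN: "0 \<le> K * N" using K0 N1 by simp
  show ?thesis
  proof (cases "N1 = 0")
    case True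
    have "u k = 0" for k using l2_point_le[OF u, of k] True by (simp add: N1_def)
    then have "E k = 0" for k by (simp add: E_def Omega_def)
    then have "in_l2 E \<and> l2norm E \<le> K * N"
      by (intro l2_from_bound KN) (simp add: power2_eq_square)
    then show ?thesis by (simp add: E_def K_def)
  next
    case False
    then have N1p: "N1 > 0" using N1 by simp
    then have Np: "N > 0" using N1 by simp
    define L where "L = ln (N / N1)"
    have L0: "L \<ge> 0" using N1p N1 by (simp add: L_def)
    have pt: "cmod (E k) \<le> K * L * cmod (u k)" for k
    proof (cases "u k = 0")
      case True then show ?thesis by (simp add: E_def Omega_def)
    next
      case False
      then have up: "cmod (u k) > 0" by simp
      have ule: "cmod (u k) \<le> N1" using l2_point_le[OF u, of k] by (simp add: N1_def)
      have a1: "ln (N / cmod (u k)) \<ge> 0" using up ule N1 by simp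
      have a2: "ln (N1 / cmod (u k)) \<ge> 0" using up ule N1 by simp
      have d: "ln (N / cmod (u k)) - ln (N1 / cmod (u k)) = L"
        using up N1p Np by (simp add: L_def ln_div)
      have "E k = u k * (f_alpha a (ln (N / cmod (u k))) - f_alpha a (ln (N1 / cmod (u k))))"
        using False by (simp add: E_def Omega_def N1_def right_diff_distrib)
      then have "cmod (E k) = cmod (u k) * cmod (f_alpha a (ln (N / cmod (u k))) - f_alpha a (ln (N1 / cmod (u k))))"
        by (simp add: norm_mult)
      also have "\<dots> \<le> cmod (u k) * (K * \<bar>ln (N / cmod (u k)) - ln (N1 / cmod (u k))\<bar>)"
        by (rule mult_left_mono[OF f_alpha_lip[OF a1 a2, of a, folded K_def]]) simp
      also have "\<dots> = K * L * cmod (u k)" using d L0 by simp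
      finally show ?thesis .
    qed
    have NL: "N1 * L \<le> N"
    proof -
      have "L \<le> N / N1 - 1" unfolding L_def using N1p Np by (intro ln_le_minus_one) simp
      then have "N1 * L \<le> N1 * (N / N1 - 1)" using N1p by (intro mult_left_mono) auto
      also have "\<dots> = N - N1" using N1p by (simp add: field_simps)
      finally show ?thesis using N1 by simp
    qed
    have "in_l2 E \<and> l2norm E \<le> K * N"
    proof (rule l2_from_bound[OF _ KN])
      fix n
      have "(\<Sum>k<n. (cmod (E k))^2) \<le> (\<Sum>k<n. (K * L)^2 * (cmod (u k))^2)"
      proof (rule sum_mono)
        fix k
        have "(cmod (E k))^2 \<le> (K * L * cmod (u k))^2"
          by (rule power_mono[OF pt]) simp
        then show "(cmod (E k))^2 \<le> (K * L)^2 * (cmod (u k))^2" by (simp add: power_mult_distrib)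
      qed
      also have "\<dots> = (K * L)^2 * (\<Sum>k<n. (cmod (u k))^2)" by (simp add: sum_distrib_left)
      also have "\<dots> \<le> (K * L)^2 * N1^2"
        using l2_finite_le[OF u, of "{..<n}"] by (intro mult_left_mono) (auto simp: N1_def)
      also have "\<dots> = (K * (N1 * L))^2" by (simp add: power_mult_distrib)
      also have "\<dots> \<le> (K * N)^2"
        using NL K0 N1 L0 by (intro power_mono mult_left_mono) auto
      finally show "(\<Sum>k<n. (cmod (E k))^2) \<le> (K * N)^2" .
    qed
    then show ?thesis by (simp add: E_def K_def)
  qed
qed
lemma omega_restrict:
  assumes x: "in_l2 x" and g: "inj g"
  shows "in_l2 (\<lambda>k. Omega al x (g k) - Omega al (\<lambda>k. x (g k)) k)
    \<and> l2norm (\<lambda>k. Omega al x (g k) - Omega al (\<lambda>k. x (g k)) k) \<le> cmod (1 + \<i> * complex_of_real al) * l2norm x"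
proof -
  have r: "in_l2 (\<lambda>k. x (g k)) \<and> l2norm (\<lambda>k. x (g k)) \<le> l2norm x" by (rule l2_restrict[OF x g])
  have e: "(\<lambda>k. Omega al x (g k) - Omega al (\<lambda>k. x (g k)) k) =
     (\<lambda>k. (if x (g k) = 0 then 0 else x (g k) * f_alpha al (ln (l2norm x / cmod (x (g k))))) - Omega al (\<lambda>k. x (g k)) k)"
    by (simp add: Omega_def)
  show ?thesis unfolding e using omega_shift[of "\<lambda>k. x (g k)" "l2norm x" al] r by simp
qed

lemma comp_T:
  assumes z: "(x, y) \<in> Zspace al" and g: "inj g"
  shows "((\<lambda>k. x (g k)), (\<lambda>k. y (g k))) \<in> Zspace al \<and>
    Znorm al ((\<lambda>k. x (g k)), (\<lambda>k. y (g k))) \<le> (1 + cmod (1 + \<i> * complex_of_real al)) * Znorm al (x, y)"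
proof -
  define K where "K = cmod (1 + \<i> * complex_of_real al)"
  have x: "in_l2 x" and yx: "in_l2 (\<lambda>k. y k - Omega al x k)" using z by (auto simp: Zspace_def)
  have r: "in_l2 (\<lambda>k. x (g k)) \<and> l2norm (\<lambda>k. x (g k)) \<le> l2norm x" by (rule l2_restrict[OF x g])
  have r2: "in_l2 (\<lambda>k. y (g k) - Omega al x (g k)) \<and> l2norm (\<lambda>k. y (g k) - Omega al x (g k)) \<le> l2norm (\<lambda>k. y k - Omega al x k)"
    using l2_restrict[OF yx g] by simp
  have e: "in_l2 (\<lambda>k. Omega al x (g k) - Omega al (\<lambda>k. x (g k)) k)
    \<and> l2norm (\<lambda>k. Omega al x (g k) - Omega al (\<lambda>k. x (g k)) k) \<le> K * l2norm x"
    using omega_restrict[OF x g, of al] by (simp add: K_def)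
  have t: "in_l2 (\<lambda>k. y (g k) - Omega al (\<lambda>k. x (g k)) k) \<and>
     l2norm (\<lambda>k. y (g k) - Omega al (\<lambda>k. x (g k)) k) \<le>
     l2norm (\<lambda>k. y (g k) - Omega al x (g k)) + l2norm (\<lambda>k. Omega al x (g k) - Omega al (\<lambda>k. x (g k)) k)"
  proof (rule l2_triangle)
    show "in_l2 (\<lambda>k. y (g k) - Omega al x (g k))" using r2 by simp
    show "in_l2 (\<lambda>k. Omega al x (g k) - Omega al (\<lambda>k. x (g k)) k)" using e by simp
    fix k
    have "y (g k) - Omega al (\<lambda>k. x (g k)) k = (y (g k) - Omega al x (g k)) + (Omega al x (g k) - Omega al (\<lambda>k. x (g k)) k)"
      by simp
    then show "cmod (y (g k) - Omega al (\<lambda>k. x (g k)) k) \<le> cmod (y (g k) - Omega al x (g k)) + cmod (Omega al x (g k) - Omega al (\<lambda>k. x (g k)) k)"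
      by (metis norm_triangle_ineq)
  qed
  have K0: "K \<ge> 0" by (simp add: K_def)
  have n1: "l2norm x \<ge> 0" by (rule l2_nonneg[OF x])
  have n2: "l2norm (\<lambda>k. y k - Omega al x k) \<ge> 0" by (rule l2_nonneg[OF yx])
  have "Znorm al ((\<lambda>k. x (g k)), (\<lambda>k. y (g k))) \<le> l2norm x + (l2norm (\<lambda>k. y k - Omega al x k) + K * l2norm x)"
    unfolding Znorm_def using r r2 e t by simp
  also have "\<dots> \<le> (1 + K) * Znorm al (x, y)"
    unfolding Znorm_def using K0 n1 n2 by (simp add: algebra_simps)
  finally show ?thesis using r t by (simp add: Zspace_def K_def)
qed

lemma zmerge_split: "zmerge (\<lambda>k. x (2*k)) (\<lambda>k. x (Suc (2*k))) = x"
  by (rule ext) (simp add: zmerge_def)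

lemma zmerge_ev [simp]: "zmerge a c (2*k) = a k" and zmerge_od [simp]: "zmerge a c (Suc (2*k)) = c k"
  by (simp_all add: zmerge_def)

lemma comp_S:
  assumes ab: "(a, b) \<in> Zspace al" and cd: "(c, d) \<in> Zspace al"
  shows "(zmerge a c, zmerge b d) \<in> Zspace al \<and>
    Znorm al (zmerge a c, zmerge b d) \<le> (1 + 2 * cmod (1 + \<i> * complex_of_real al)) * (Znorm al (a, b) + Znorm al (c, d))"
proof -
  define K where "K = cmod (1 + \<i> * complex_of_real al)"
  define x where "x = zmerge a c"
  define y where "y = zmerge b d"
  have a: "in_l2 a" and ba: "in_l2 (\<lambda>k. b k - Omega al a k)" using ab by (auto simp: Zspace_def)
  have c: "in_l2 c" and dc: "in_l2 (\<lambda>k. d k - Omega al c k)" using cd by (auto simp: Zspace_def)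
  have xm: "in_l2 x \<and> l2norm x \<le> l2norm a + l2norm c" unfolding x_def by (rule l2_zmerge[OF a c])
  then have x: "in_l2 x" by simp
  have ie: "inj (\<lambda>k::nat. 2*k)" by (auto simp: inj_def)
  have io: "inj (\<lambda>k::nat. 2*k+1)" by (auto simp: inj_def)
  have ax: "(\<lambda>k. x (2*k)) = a" and cx: "(\<lambda>k. x (2*k+1)) = c" by (auto simp: x_def)
  have ea: "in_l2 (\<lambda>k. Omega al x (2*k) - Omega al a k) \<and> l2norm (\<lambda>k. Omega al x (2*k) - Omega al a k) \<le> K * l2norm x"
    using omega_restrict[OF x ie, of al] unfolding ax K_def by simp
  have ec: "in_l2 (\<lambda>k. Omega al x (2*k+1) - Omega al c k) \<and> l2norm (\<lambda>k. Omega al x (2*k+1) - Omega al c k) \<le> K * l2norm x"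
    using omega_restrict[OF x io, of al] unfolding cx K_def by simp
  have pa: "in_l2 (\<lambda>k. (b k - Omega al a k) - (Omega al x (2*k) - Omega al a k)) \<and>
     l2norm (\<lambda>k. (b k - Omega al a k) - (Omega al x (2*k) - Omega al a k)) \<le>
     l2norm (\<lambda>k. b k - Omega al a k) + l2norm (\<lambda>k. Omega al x (2*k) - Omega al a k)"
    by (rule l2_triangle[OF ba conjunct1[OF ea]]) (rule norm_triangle_ineq4)
  have pc: "in_l2 (\<lambda>k. (d k - Omega al c k) - (Omega al x (2*k+1) - Omega al c k)) \<and>
     l2norm (\<lambda>k. (d k - Omega al c k) - (Omega al x (2*k+1) - Omega al c k)) \<le>
     l2norm (\<lambda>k. d k - Omega al c k) + l2norm (\<lambda>k. Omega al x (2*k+1) - Omega al c k)"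
    by (rule l2_triangle[OF dc conjunct1[OF ec]]) (rule norm_triangle_ineq4)
  have yeq: "(\<lambda>k. y k - Omega al x k) = zmerge (\<lambda>k. (b k - Omega al a k) - (Omega al x (2*k) - Omega al a k))
      (\<lambda>k. (d k - Omega al c k) - (Omega al x (2*k+1) - Omega al c k))"
  proof (rule ext)
    fix k :: nat
    show "y k - Omega al x k = zmerge (\<lambda>k. (b k - Omega al a k) - (Omega al x (2*k) - Omega al a k))
      (\<lambda>k. (d k - Omega al c k) - (Omega al x (2*k+1) - Omega al c k)) k"
    proof (cases "even k")
      case True
      then obtain j where "k = 2*j" by blast
      then show ?thesis by (simp add: y_def)
    next
      case False
      then obtain j where "k = 2*j+1" using oddE by blast
      then show ?thesis by (simp add: y_def)
    qed
  qed
  have ym: "in_l2 (\<lambda>k. y k - Omega al x k) \<and> l2norm (\<lambda>k. y k - Omega al x k) \<le>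
     l2norm (\<lambda>k. (b k - Omega al a k) - (Omega al x (2*k) - Omega al a k)) +
     l2norm (\<lambda>k. (d k - Omega al c k) - (Omega al x (2*k+1) - Omega al c k))"
    unfolding yeq by (rule l2_zmerge) (use pa pc in auto)
  have K0: "K \<ge> 0" by (simp add: K_def)
  have n1: "l2norm a \<ge> 0" "l2norm c \<ge> 0" "l2norm (\<lambda>k. b k - Omega al a k) \<ge> 0" "l2norm (\<lambda>k. d k - Omega al c k) \<ge> 0"
    using l2_nonneg a c ba dc by auto
  have "Znorm al (x, y) \<le> l2norm x + (l2norm (\<lambda>k. b k - Omega al a k) + K * l2norm x) + (l2norm (\<lambda>k. d k - Omega al c k) + K * l2norm x)"
    unfolding Znorm_def using ym pa pc ea ec by simp
  also have "\<dots> = (1 + 2*K) * l2norm x + l2norm (\<lambda>k. b k - Omega al a k) + l2norm (\<lambda>k. d k - Omega al c k)"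
    by (simp add: algebra_simps)
  also have "\<dots> \<le> (1 + 2*K) * (l2norm a + l2norm c) + l2norm (\<lambda>k. b k - Omega al a k) + l2norm (\<lambda>k. d k - Omega al c k)"
    using xm K0 by (simp add: mult_left_mono)
  also have "\<dots> \<le> (1 + 2 * K) * (Znorm al (a, b) + Znorm al (c, d))"
    unfolding Znorm_def using K0 n1 by (simp add: algebra_simps)
  finally show ?thesis using x ym by (simp add: Zspace_def K_def x_def y_def)
qed

theorem mainTheorem1:
  fixes \<alpha> :: real
  shows "Z_cartesian \<alpha>"
proof -
  define K where "K = cmod (1 + \<i> * complex_of_real \<alpha>)"
  define T :: "cseq \<times> cseq \<Rightarrow> (cseq \<times> cseq) \<times> (cseq \<times> cseq)" where
    "T = (\<lambda>z. (((\<lambda>k. fst z (2*k)), (\<lambda>k. snd z (2*k))), ((\<lambda>k. fst z (2*k+1)), (\<lambda>k. snd z (2*k+1)))))"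
  define S :: "(cseq \<times> cseq) \<times> (cseq \<times> cseq) \<Rightarrow> cseq \<times> cseq" where
    "S = (\<lambda>p. (zmerge (fst (fst p)) (fst (snd p)), zmerge (snd (fst p)) (snd (snd p))))"
  have ie: "inj (\<lambda>k::nat. 2*k)" by (auto simp: inj_def)
  have io: "inj (\<lambda>k::nat. 2*k+1)" by (auto simp: inj_def)
  have TZ: "T z \<in> Zspace \<alpha> \<times> Zspace \<alpha> \<and> Znorm \<alpha> (fst (T z)) + Znorm \<alpha> (snd (T z)) \<le> (2 * (1 + K)) * Znorm \<alpha> z"
    if z: "z \<in> Zspace \<alpha>" for z
  proof -
    obtain x y where xy: "z = (x, y)" by fastforce
    have 1: "((\<lambda>k. x (2*k)), (\<lambda>k. y (2*k))) \<in> Zspace \<alpha> \<and>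
      Znorm \<alpha> ((\<lambda>k. x (2*k)), (\<lambda>k. y (2*k))) \<le> (1 + K) * Znorm \<alpha> (x, y)"
      using comp_T[OF z[unfolded xy] ie] by (simp add: K_def)
    have 2: "((\<lambda>k. x (2*k+1)), (\<lambda>k. y (2*k+1))) \<in> Zspace \<alpha> \<and>
      Znorm \<alpha> ((\<lambda>k. x (2*k+1)), (\<lambda>k. y (2*k+1))) \<le> (1 + K) * Znorm \<alpha> (x, y)"
      using comp_T[OF z[unfolded xy] io] by (simp add: K_def)
    show ?thesis using 1 2 by (simp add: T_def xy algebra_simps)
  qed
  have SZ: "S p \<in> Zspace \<alpha> \<and> Znorm \<alpha> (S p) \<le> (1 + 2 * K) * (Znorm \<alpha> (fst p) + Znorm \<alpha> (snd p))"
    if p: "p \<in> Zspace \<alpha> \<times> Zspace \<alpha>" for p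
  proof -
    obtain a b c d where pe: "p = ((a, b), (c, d))" by (metis prod.collapse)
    have ab: "(a, b) \<in> Zspace \<alpha>" and cd: "(c, d) \<in> Zspace \<alpha>" using p pe by auto
    show ?thesis using comp_S[OF ab cd] by (simp add: S_def pe K_def)
  qed
  have ST: "S (T z) = z" for z
    by (simp add: S_def T_def zmerge_split)
  have TS: "T (S p) = p" for p
    by (simp add: S_def T_def)
  have L: "\<forall>z\<in>Zspace \<alpha>. \<forall>w\<in>Zspace \<alpha>. \<forall>a b. T (zadd (zscale a z) (zscale b w)) =
            (zadd (zscale a (fst (T z))) (zscale b (fst (T w))),
             zadd (zscale a (snd (T z))) (zscale b (snd (T w))))"
    by (simp add: T_def zadd_def zscale_def)
  have B1: "\<exists>C. \<forall>z\<in>Zspace \<alpha>. Znorm \<alpha> (fst (T z)) + Znorm \<alpha> (snd (T z)) \<le> C * Znorm \<alpha> z"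
    using TZ by blast
  have B2: "\<exists>C. \<forall>p\<in>Zspace \<alpha> \<times> Zspace \<alpha>. Znorm \<alpha> (S p) \<le> C * (Znorm \<alpha> (fst p) + Znorm \<alpha> (snd p))"
    using SZ by blast
  have M1: "\<forall>z\<in>Zspace \<alpha>. T z \<in> Zspace \<alpha> \<times> Zspace \<alpha>" using TZ by blast
  have M2: "\<forall>p\<in>Zspace \<alpha> \<times> Zspace \<alpha>. S p \<in> Zspace \<alpha>" using SZ by blast
  show ?thesis
    unfolding Z_cartesian_def using M1 M2 ST TS L B1 B2 by blast
qed
end
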